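(* Let $R$ be a commutative ring and $\mathcal A$ an $R$-algebra whose structure map $R\to\mathcal A$ is injective (so $R\subseteq\mathcal A$). Then $\mathcal A$ is a strongly simple $R$-algebra if and only if the following three statements hold: (i) $R$ is an integral domain; (ii) $\mathcal A\simeq K_R$ as $R$-algebras; (iii) $K_R$ as an $R$-algebra is strongly simple.
   Context: Algebras are associative, unital and nonzero. $K_R$ denotes the field of fractions of an integral domain $R$. An $R$-submodule $M$ of $\mathcal A$ is a (two-sided) Mathieu subspace if whenever $a\in\mathcal A$ satisfies $a^m\in M$ for all $m\ge1$, then for all $b,c\in\mathcal A$ there is $N$ with $ba^mc\in M$ for all $m\ge N$. $\mathcal A$ is a strongly simple $R$-algebra if its only Mathieu subspaces are $0$ and $\mathcal A$. *)

theory Defs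
  imports "HOL-Algebra.Algebra"
begin

definition is_algebra :: "('r, 'm) ring_scheme \<Rightarrow> ('a, 'n) ring_scheme \<Rightarrow> ('r \<Rightarrow> 'a) \<Rightarrow> bool" where
  "is_algebra R A phi \<longleftrightarrow> cring R \<and> ring A \<and> phi \<in> ring_hom R A \<and>
     (\<forall>r\<in>carrier R. \<forall>x\<in>carrier A. phi r \<otimes>\<^bsub>A\<^esub> x = x \<otimes>\<^bsub>A\<^esub> phi r)"

definition is_submodule :: "('r, 'm) ring_scheme \<Rightarrow> ('a, 'n) ring_scheme \<Rightarrow> ('r \<Rightarrow> 'a) \<Rightarrow> 'a set \<Rightarrow> bool" where
  "is_submodule R A phi M \<longleftrightarrow> M \<subseteq> carrier A \<and> \<zero>\<^bsub>A\<^esub> \<in> M \<and>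
     (\<forall>x\<in>M. \<forall>y\<in>M. x \<oplus>\<^bsub>A\<^esub> y \<in> M) \<and>
     (\<forall>r\<in>carrier R. \<forall>x\<in>M. phi r \<otimes>\<^bsub>A\<^esub> x \<in> M)"

definition is_mathieu_subspace :: "('r, 'm) ring_scheme \<Rightarrow> ('a, 'n) ring_scheme \<Rightarrow> ('r \<Rightarrow> 'a) \<Rightarrow> 'a set \<Rightarrow> bool" where
  "is_mathieu_subspace R A phi M \<longleftrightarrow> is_submodule R A phi M \<and>
     (\<forall>a\<in>carrier A. (\<forall>m::nat. m \<ge> 1 \<longrightarrow> a [^]\<^bsub>A\<^esub> m \<in> M) \<longrightarrow>
        (\<forall>b\<in>carrier A. \<forall>c\<in>carrier A. \<exists>N::nat. \<forall>m\<ge>N. b \<otimes>\<^bsub>A\<^esub> (a [^]\<^bsub>A\<^esub> m) \<otimes>\<^bsub>A\<^esub> c \<in> M))"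

definition strongly_simple :: "('r, 'm) ring_scheme \<Rightarrow> ('a, 'n) ring_scheme \<Rightarrow> ('r \<Rightarrow> 'a) \<Rightarrow> bool" where
  "strongly_simple R A phi \<longleftrightarrow>
     (\<forall>M. is_mathieu_subspace R A phi M \<longrightarrow> M = {\<zero>\<^bsub>A\<^esub>} \<or> M = carrier A)"

text \<open>Field of fractions K_R of an integral domain R: classes of pairs (a,b), b nonzero,
  under (a,b) ~ (c,d) iff a d = c b.  (Meaningful when R is a domain.)\<close>

definition frac_class :: "('r, 'm) ring_scheme \<Rightarrow> 'r \<times> 'r \<Rightarrow> ('r \<times> 'r) set" where
  "frac_class R p = {(c, d). c \<in> carrier R \<and> d \<in> carrier R - {\<zero>\<^bsub>R\<^esub>} \<and>
      fst p \<otimes>\<^bsub>R\<^esub> d = c \<otimes>\<^bsub>R\<^esub> snd p}"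

definition frac_mult :: "('r, 'm) ring_scheme \<Rightarrow> ('r \<times> 'r) set \<Rightarrow> ('r \<times> 'r) set \<Rightarrow> ('r \<times> 'r) set" where
  "frac_mult R U V = \<Union> ((\<lambda>((a, b), (c, d)). frac_class R (a \<otimes>\<^bsub>R\<^esub> c, b \<otimes>\<^bsub>R\<^esub> d)) ` (U \<times> V))"

definition frac_add :: "('r, 'm) ring_scheme \<Rightarrow> ('r \<times> 'r) set \<Rightarrow> ('r \<times> 'r) set \<Rightarrow> ('r \<times> 'r) set" where
  "frac_add R U V = \<Union> ((\<lambda>((a, b), (c, d)). frac_class R ((a \<otimes>\<^bsub>R\<^esub> d) \<oplus>\<^bsub>R\<^esub> (c \<otimes>\<^bsub>R\<^esub> b), b \<otimes>\<^bsub>R\<^esub> d)) ` (U \<times> V))"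

definition frac_field :: "('r, 'm) ring_scheme \<Rightarrow> (('r \<times> 'r) set) ring" where
  "frac_field R =
     \<lparr> carrier = frac_class R ` (carrier R \<times> (carrier R - {\<zero>\<^bsub>R\<^esub>})),
       Group.monoid.mult = frac_mult R,
       Group.monoid.one = frac_class R (\<one>\<^bsub>R\<^esub>, \<one>\<^bsub>R\<^esub>),
       Ring.ring.zero = frac_class R (\<zero>\<^bsub>R\<^esub>, \<one>\<^bsub>R\<^esub>),
       Ring.ring.add = frac_add R \<rparr>"

definition frac_embed :: "('r, 'm) ring_scheme \<Rightarrow> 'r \<Rightarrow> ('r \<times> 'r) set" where
  "frac_embed R r = frac_class R (r, \<one>\<^bsub>R\<^esub>)"

definition algebra_iso :: "('r, 'm) ring_scheme \<Rightarrow> ('a, 'n) ring_scheme \<Rightarrow> ('r \<Rightarrow> 'a)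
    \<Rightarrow> ('b, 'k) ring_scheme \<Rightarrow> ('r \<Rightarrow> 'b) \<Rightarrow> bool" where
  "algebra_iso R A phi B psi \<longleftrightarrow>
     (\<exists>f. f \<in> ring_iso A B \<and> (\<forall>r\<in>carrier R. f (phi r) = psi r))"

end

theory Submission
  imports Defs
begin

lemma pow_closed_gen:
  assumes one: "\<one>\<^bsub>A\<^esub> \<in> carrier A"
    and cl: "\<And>x y. x \<in> carrier A \<Longrightarrow> y \<in> carrier A \<Longrightarrow> x \<otimes>\<^bsub>A\<^esub> y \<in> carrier A"
    and a: "a \<in> carrier A"
  shows "a [^]\<^bsub>A\<^esub> (m::nat) \<in> carrier A"
  by (induct m) (auto simp: one cl a)

lemma pow_hom_gen:
  assumes one: "\<one>\<^bsub>A\<^esub> \<in> carrier A"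
    and cl: "\<And>x y. x \<in> carrier A \<Longrightarrow> y \<in> carrier A \<Longrightarrow> x \<otimes>\<^bsub>A\<^esub> y \<in> carrier A"
    and hm: "\<And>x y. x \<in> carrier A \<Longrightarrow> y \<in> carrier A \<Longrightarrow> f (x \<otimes>\<^bsub>A\<^esub> y) = f x \<otimes>\<^bsub>B\<^esub> f y"
    and f1: "f \<one>\<^bsub>A\<^esub> = \<one>\<^bsub>B\<^esub>"
    and a: "a \<in> carrier A"
  shows "f (a [^]\<^bsub>A\<^esub> (m::nat)) = f a [^]\<^bsub>B\<^esub> m"
proof (induct m)
  case 0 then show ?case using f1 by simp
next
  case (Suc m) then show ?case
    using hm[OF pow_closed_gen[OF one cl a] a] by simp
qed

lemma transfer_ss:
  fixes R :: "('r, 'm) ring_scheme" and A :: "('a, 'n) ring_scheme" and B :: "('b, 'k) ring_scheme"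
  assumes ss: "strongly_simple R A phi"
    and bij: "bij_betw f (carrier A) (carrier B)"
    and one: "\<one>\<^bsub>A\<^esub> \<in> carrier A" and zero: "\<zero>\<^bsub>A\<^esub> \<in> carrier A"
    and cl: "\<And>x y. x \<in> carrier A \<Longrightarrow> y \<in> carrier A \<Longrightarrow> x \<otimes>\<^bsub>A\<^esub> y \<in> carrier A"
    and addc: "\<And>x y. x \<in> carrier A \<Longrightarrow> y \<in> carrier A \<Longrightarrow> x \<oplus>\<^bsub>A\<^esub> y \<in> carrier A"
    and hm: "\<And>x y. x \<in> carrier A \<Longrightarrow> y \<in> carrier A \<Longrightarrow> f (x \<otimes>\<^bsub>A\<^esub> y) = f x \<otimes>\<^bsub>B\<^esub> f y"
    and ha: "\<And>x y. x \<in> carrier A \<Longrightarrow> y \<in> carrier A \<Longrightarrow> f (x \<oplus>\<^bsub>A\<^esub> y) = f x \<oplus>\<^bsub>B\<^esub> f y"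
    and f1: "f \<one>\<^bsub>A\<^esub> = \<one>\<^bsub>B\<^esub>" and f0: "f \<zero>\<^bsub>A\<^esub> = \<zero>\<^bsub>B\<^esub>"
    and phic: "\<And>r. r \<in> carrier R \<Longrightarrow> phi r \<in> carrier A"
    and fphi: "\<And>r. r \<in> carrier R \<Longrightarrow> f (phi r) = psi r"
  shows "strongly_simple R B psi"
  unfolding strongly_simple_def
proof (intro allI impI)
  fix M assume MM: "is_mathieu_subspace R B psi M"
  have sub: "is_submodule R B psi M" using MM unfolding is_mathieu_subspace_def by blast
  have fA: "\<And>x. x \<in> carrier A \<Longrightarrow> f x \<in> carrier B" by (rule bij_betw_apply[OF bij])
  define M' where "M' = {x \<in> carrier A. f x \<in> M}"
  have sub': "is_submodule R A phi M'"
    unfolding is_submodule_def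
  proof (intro conjI ballI)
    show "M' \<subseteq> carrier A" unfolding M'_def by auto
    show "\<zero>\<^bsub>A\<^esub> \<in> M'" unfolding M'_def using zero f0 sub unfolding is_submodule_def by auto
  next
    fix x y assume "x \<in> M'" "y \<in> M'"
    then have x: "x \<in> carrier A" "f x \<in> M" and y: "y \<in> carrier A" "f y \<in> M" unfolding M'_def by auto
    have "f (x \<oplus>\<^bsub>A\<^esub> y) \<in> M" using ha[OF x(1) y(1)] x(2) y(2) sub unfolding is_submodule_def by simp
    moreover have "x \<oplus>\<^bsub>A\<^esub> y \<in> carrier A" using addc x y by blast
    ultimately show "x \<oplus>\<^bsub>A\<^esub> y \<in> M'" unfolding M'_def by blast
  next
    fix r x assume r: "r \<in> carrier R" and "x \<in> M'"
    then have x: "x \<in> carrier A" "f x \<in> M" unfolding M'_def by auto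
    have "f (phi r \<otimes>\<^bsub>A\<^esub> x) \<in> M" using hm[OF phic[OF r] x(1)] fphi[OF r] x(2) r sub
      unfolding is_submodule_def by simp
    moreover have "phi r \<otimes>\<^bsub>A\<^esub> x \<in> carrier A" using cl[OF phic[OF r] x(1)] .
    ultimately show "phi r \<otimes>\<^bsub>A\<^esub> x \<in> M'" unfolding M'_def by blast
  qed
  have "is_mathieu_subspace R A phi M'"
    unfolding is_mathieu_subspace_def
  proof (intro conjI sub' ballI impI)
    fix a b c assume a: "a \<in> carrier A" and pw: "\<forall>m::nat. m \<ge> 1 \<longrightarrow> a [^]\<^bsub>A\<^esub> m \<in> M'"
      and b: "b \<in> carrier A" and c: "c \<in> carrier A"
    have "\<forall>m::nat. m \<ge> 1 \<longrightarrow> f a [^]\<^bsub>B\<^esub> m \<in> M"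
      using pw pow_hom_gen[OF one cl hm f1 a] unfolding M'_def by auto
    then obtain N :: nat where N: "\<forall>m::nat\<ge>N. f b \<otimes>\<^bsub>B\<^esub> (f a [^]\<^bsub>B\<^esub> m) \<otimes>\<^bsub>B\<^esub> f c \<in> M"
      using MM fA[OF a] fA[OF b] fA[OF c] unfolding is_mathieu_subspace_def by blast
    show "\<exists>N::nat. \<forall>m::nat\<ge>N. b \<otimes>\<^bsub>A\<^esub> a [^]\<^bsub>A\<^esub> m \<otimes>\<^bsub>A\<^esub> c \<in> M'"
    proof (intro exI[of _ N] allI impI)
      fix m :: nat assume "N \<le> m"
      have p: "a [^]\<^bsub>A\<^esub> m \<in> carrier A" using pow_closed_gen[OF one cl a] .
      have "f (b \<otimes>\<^bsub>A\<^esub> a [^]\<^bsub>A\<^esub> m \<otimes>\<^bsub>A\<^esub> c) = f b \<otimes>\<^bsub>B\<^esub> (f a [^]\<^bsub>B\<^esub> m) \<otimes>\<^bsub>B\<^esub> f c"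
        using hm[OF cl[OF b p] c] hm[OF b p] pow_hom_gen[OF one cl hm f1 a] by simp
      then show "b \<otimes>\<^bsub>A\<^esub> a [^]\<^bsub>A\<^esub> m \<otimes>\<^bsub>A\<^esub> c \<in> M'"
        using N \<open>N \<le> m\<close> cl[OF cl[OF b p] c] unfolding M'_def by auto
    qed
  qed
  then have "M' = {\<zero>\<^bsub>A\<^esub>} \<or> M' = carrier A" using ss unfolding strongly_simple_def by blast
  moreover have "M = f ` M'"
  proof -
    have "M \<subseteq> carrier B" using sub unfolding is_submodule_def by blast
    then show ?thesis using bij unfolding M'_def bij_betw_def by auto
  qed
  moreover have "f ` carrier A = carrier B" using bij unfolding bij_betw_def by blast
  ultimately show "M = {\<zero>\<^bsub>B\<^esub>} \<or> M = carrier B" using f0 by auto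
qed

definition frrep :: "('r, 'm) ring_scheme \<Rightarrow> ('a, 'n) ring_scheme \<Rightarrow> ('r \<Rightarrow> 'a) \<Rightarrow> 'a \<Rightarrow> ('r \<times> 'r) set" where
  "frrep RR AA ph x = frac_class RR (SOME p. fst p \<in> carrier RR \<and> snd p \<in> carrier RR \<and> snd p \<noteq> \<zero>\<^bsub>RR\<^esub> \<and> ph (snd p) \<otimes>\<^bsub>AA\<^esub> x = ph (fst p))"



context
  fixes R :: "('r, 'm) ring_scheme" (structure)
  assumes dom: "domain R"
begin

lemma fc_mem: "(c, d) \<in> frac_class R (r, s) \<longleftrightarrow> c \<in> carrier R \<and> d \<in> carrier R \<and> d \<noteq> \<zero> \<and> r \<otimes> d = c \<otimes> s"
  unfolding frac_class_def by auto

lemma fc_self: "r \<in> carrier R \<Longrightarrow> s \<in> carrier R \<Longrightarrow> s \<noteq> \<zero> \<Longrightarrow> (r, s) \<in> frac_class R (r, s)"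
proof -
  interpret domain R by (rule dom)
  show "r \<in> carrier R \<Longrightarrow> s \<in> carrier R \<Longrightarrow> s \<noteq> \<zero> \<Longrightarrow> (r, s) \<in> frac_class R (r, s)"
    unfolding fc_mem by (simp add: m_comm)
qed

lemma fc_eq:
  assumes r: "r \<in> carrier R" "s \<in> carrier R" "s \<noteq> \<zero>"
    and r': "r' \<in> carrier R" "s' \<in> carrier R" "s' \<noteq> \<zero>"
    and e: "r \<otimes> s' = r' \<otimes> s"
  shows "frac_class R (r, s) = frac_class R (r', s')"
proof -
  interpret domain R by (rule dom)
  have dir: "a' \<otimes> d = c \<otimes> b'"
    if a: "a \<in> carrier R" "b \<in> carrier R" "b \<noteq> \<zero>" and a': "a' \<in> carrier R" "b' \<in> carrier R" "b' \<noteq> \<zero>"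
      and ee: "a \<otimes> b' = a' \<otimes> b" and cd: "c \<in> carrier R" "d \<in> carrier R" and h: "a \<otimes> d = c \<otimes> b"
    for a b a' b' c d
  proof -
    have "b \<otimes> (a' \<otimes> d) = (a' \<otimes> b) \<otimes> d" using a(1,2) a'(1,2) cd by (simp add: m_ac)
    also have "\<dots> = (a \<otimes> b') \<otimes> d" using ee by simp
    also have "\<dots> = (a \<otimes> d) \<otimes> b'" using a(1,2) a'(1,2) cd by (simp add: m_ac)
    also have "\<dots> = (c \<otimes> b) \<otimes> b'" using h by simp
    also have "\<dots> = b \<otimes> (c \<otimes> b')" using a(1,2) a'(1,2) cd by (simp add: m_ac)
    finally have "b \<otimes> (a' \<otimes> d) = b \<otimes> (c \<otimes> b')" .
    then show ?thesis using m_lcancel[of b "a' \<otimes> d" "c \<otimes> b'"] a a' cd by simp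
  qed
  show ?thesis unfolding frac_class_def
    using dir[OF r r' e] dir[OF r' r e[symmetric]] by auto
qed

lemma fc_eqD:
  assumes r: "r \<in> carrier R" "s \<in> carrier R" "s \<noteq> \<zero>"
    and r': "r' \<in> carrier R" "s' \<in> carrier R" "s' \<noteq> \<zero>"
    and e: "frac_class R (r, s) = frac_class R (r', s')"
  shows "r \<otimes> s' = r' \<otimes> s"
proof -
  have "(r', s') \<in> frac_class R (r, s)" using fc_self[OF r'] e by simp
  then show ?thesis unfolding fc_mem by simp
qed

lemma fc_mult:
  assumes r: "r \<in> carrier R" "s \<in> carrier R" "s \<noteq> \<zero>"
    and r': "r' \<in> carrier R" "s' \<in> carrier R" "s' \<noteq> \<zero>"
  shows "frac_mult R (frac_class R (r, s)) (frac_class R (r', s')) = frac_class R (r \<otimes> r', s \<otimes> s')"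
proof -
  interpret domain R by (rule dom)
  have ss: "s \<otimes> s' \<noteq> \<zero>" using r r' integral by blast
  have each: "frac_class R (a \<otimes> c, b \<otimes> d) = frac_class R (r \<otimes> r', s \<otimes> s')"
    if "(a, b) \<in> frac_class R (r, s)" "(c, d) \<in> frac_class R (r', s')" for a b c d
  proof -
    have h: "a \<in> carrier R" "b \<in> carrier R" "b \<noteq> \<zero>" "r \<otimes> b = a \<otimes> s"
      "c \<in> carrier R" "d \<in> carrier R" "d \<noteq> \<zero>" "r' \<otimes> d = c \<otimes> s'"
      using that unfolding fc_mem by auto
    have bd: "b \<otimes> d \<noteq> \<zero>" using h integral by blast
    have "a \<otimes> c \<otimes> (s \<otimes> s') = (a \<otimes> s) \<otimes> (c \<otimes> s')" using h(1,2,5,6) r r' by (simp add: m_ac)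
    also have "\<dots> = (r \<otimes> b) \<otimes> (r' \<otimes> d)" using h(4,8) by simp
    also have "\<dots> = r \<otimes> r' \<otimes> (b \<otimes> d)" using h(1,2,5,6) r r' by (simp add: m_ac)
    finally show ?thesis using fc_eq h r r' ss bd by simp
  qed
  show ?thesis
    unfolding frac_mult_def
  proof
    show "(\<Union>x\<in>frac_class R (r, s) \<times> frac_class R (r', s'). case x of (x, xa) \<Rightarrow> (case x of (a, b) \<Rightarrow> \<lambda>(c, d). frac_class R (a \<otimes> c, b \<otimes> d)) xa)
      \<subseteq> frac_class R (r \<otimes> r', s \<otimes> s')"
      using each by auto
    show "frac_class R (r \<otimes> r', s \<otimes> s') \<subseteq> (\<Union>x\<in>frac_class R (r, s) \<times> frac_class R (r', s'). case x of (x, xa) \<Rightarrow> (case x of (a, b) \<Rightarrow> \<lambda>(c, d). frac_class R (a \<otimes> c, b \<otimes> d)) xa)"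
      using fc_self[OF r] fc_self[OF r'] by force
  qed
qed

lemma fc_add:
  assumes r: "r \<in> carrier R" "s \<in> carrier R" "s \<noteq> \<zero>"
    and r': "r' \<in> carrier R" "s' \<in> carrier R" "s' \<noteq> \<zero>"
  shows "frac_add R (frac_class R (r, s)) (frac_class R (r', s')) = frac_class R (r \<otimes> s' \<oplus> r' \<otimes> s, s \<otimes> s')"
proof -
  interpret domain R by (rule dom)
  have ss: "s \<otimes> s' \<noteq> \<zero>" using r r' integral by blast
  have each: "frac_class R (a \<otimes> d \<oplus> c \<otimes> b, b \<otimes> d) = frac_class R (r \<otimes> s' \<oplus> r' \<otimes> s, s \<otimes> s')"
    if "(a, b) \<in> frac_class R (r, s)" "(c, d) \<in> frac_class R (r', s')" for a b c d
  proof -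
    have h: "a \<in> carrier R" "b \<in> carrier R" "b \<noteq> \<zero>" "r \<otimes> b = a \<otimes> s"
      "c \<in> carrier R" "d \<in> carrier R" "d \<noteq> \<zero>" "r' \<otimes> d = c \<otimes> s'"
      using that unfolding fc_mem by auto
    have bd: "b \<otimes> d \<noteq> \<zero>" using h integral by blast
    have "(a \<otimes> d \<oplus> c \<otimes> b) \<otimes> (s \<otimes> s') = (a \<otimes> s) \<otimes> (d \<otimes> s') \<oplus> (c \<otimes> s') \<otimes> (b \<otimes> s)"
      using h(1,2,5,6) r r' by (simp add: l_distr r_distr m_ac)
    also have "\<dots> = (r \<otimes> b) \<otimes> (d \<otimes> s') \<oplus> (r' \<otimes> d) \<otimes> (b \<otimes> s)" using h(4,8) by simp
    also have "\<dots> = (r \<otimes> s' \<oplus> r' \<otimes> s) \<otimes> (b \<otimes> d)" using h(1,2,5,6) r r' by (simp add: l_distr r_distr m_ac)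
    finally show ?thesis using fc_eq h r r' ss bd by simp
  qed
  show ?thesis
    unfolding frac_add_def
  proof
    show "(\<Union>x\<in>frac_class R (r, s) \<times> frac_class R (r', s'). case x of (x, xa) \<Rightarrow> (case x of (a, b) \<Rightarrow> \<lambda>(c, d). frac_class R (a \<otimes> d \<oplus> c \<otimes> b, b \<otimes> d)) xa)
      \<subseteq> frac_class R (r \<otimes> s' \<oplus> r' \<otimes> s, s \<otimes> s')"
      using each by auto
    show "frac_class R (r \<otimes> s' \<oplus> r' \<otimes> s, s \<otimes> s') \<subseteq> (\<Union>x\<in>frac_class R (r, s) \<times> frac_class R (r', s'). case x of (x, xa) \<Rightarrow> (case x of (a, b) \<Rightarrow> \<lambda>(c, d). frac_class R (a \<otimes> d \<oplus> c \<otimes> b, b \<otimes> d)) xa)"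
      using fc_self[OF r] fc_self[OF r'] by force
  qed
qed

end


context
  fixes A :: "('a, 'n) ring_scheme" (structure) and R :: "('r, 'm) ring_scheme" and phi :: "'r \<Rightarrow> 'a"
  assumes alg: "is_algebra R A phi"
    and nonzero: "\<one>\<^bsub>A\<^esub> \<noteq> \<zero>\<^bsub>A\<^esub>"
    and inj: "inj_on phi (carrier R)"
    and ss: "strongly_simple R A phi"
begin

lemma rA: "ring A" using alg unfolding is_algebra_def by blast
lemma cR: "cring R" using alg unfolding is_algebra_def by blast
lemma hom: "phi \<in> ring_hom R A" using alg unfolding is_algebra_def by blast
lemma cen: "r \<in> carrier R \<Longrightarrow> x \<in> carrier A \<Longrightarrow> phi r \<otimes>\<^bsub>A\<^esub> x = x \<otimes>\<^bsub>A\<^esub> phi r"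
  using alg unfolding is_algebra_def by blast
lemma phic: "r \<in> carrier R \<Longrightarrow> phi r \<in> carrier A"
  using hom unfolding ring_hom_def by auto
lemma phim: "r \<in> carrier R \<Longrightarrow> s \<in> carrier R \<Longrightarrow> phi (r \<otimes>\<^bsub>R\<^esub> s) = phi r \<otimes>\<^bsub>A\<^esub> phi s"
  using hom unfolding ring_hom_def by auto
lemma phia: "r \<in> carrier R \<Longrightarrow> s \<in> carrier R \<Longrightarrow> phi (r \<oplus>\<^bsub>R\<^esub> s) = phi r \<oplus>\<^bsub>A\<^esub> phi s"
  using hom unfolding ring_hom_def by auto
lemma phi1: "phi \<one>\<^bsub>R\<^esub> = \<one>\<^bsub>A\<^esub>"
  using hom unfolding ring_hom_def by auto
lemma phi0: "phi \<zero>\<^bsub>R\<^esub> = \<zero>\<^bsub>A\<^esub>"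
  using ring_hom_zero[OF hom cring.axioms(1)[OF cR] rA] .
lemma phi_inj0: "r \<in> carrier R \<Longrightarrow> phi r = \<zero>\<^bsub>A\<^esub> \<Longrightarrow> r = \<zero>\<^bsub>R\<^esub>"
  using inj phi0 cring.axioms(1)[OF cR] ring.ring_simprules(2)[of R] unfolding inj_on_def by metis

lemma ideal_triv:
  assumes sub: "is_submodule R A phi M"
    and cl: "\<And>z b c. z \<in> M \<Longrightarrow> b \<in> carrier A \<Longrightarrow> c \<in> carrier A \<Longrightarrow> b \<otimes>\<^bsub>A\<^esub> z \<otimes>\<^bsub>A\<^esub> c \<in> M"
  shows "M = {\<zero>\<^bsub>A\<^esub>} \<or> M = carrier A"
proof -
  have "is_mathieu_subspace R A phi M"
    unfolding is_mathieu_subspace_def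
  proof (intro conjI sub ballI impI)
    fix a b c assume "a \<in> carrier A" "\<forall>m::nat. 1 \<le> m \<longrightarrow> a [^]\<^bsub>A\<^esub> m \<in> M"
      "b \<in> carrier A" "c \<in> carrier A"
    then show "\<exists>N. \<forall>m::nat\<ge>N. b \<otimes>\<^bsub>A\<^esub> a [^]\<^bsub>A\<^esub> m \<otimes>\<^bsub>A\<^esub> c \<in> M"
      by (intro exI[of _ 1] allI impI cl) auto
  qed
  then show ?thesis using ss unfolding strongly_simple_def by blast
qed

lemma sq0_triv:
  assumes sub: "is_submodule R A phi M"
    and sq: "\<And>z. z \<in> M \<Longrightarrow> z \<otimes>\<^bsub>A\<^esub> z = \<zero>\<^bsub>A\<^esub>"
  shows "M = {\<zero>\<^bsub>A\<^esub>}"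
proof -
  interpret ring A by (rule rA)
  have MA: "M \<subseteq> carrier A" and M0: "\<zero> \<in> M" using sub unfolding is_submodule_def by auto
  have "is_mathieu_subspace R A phi M"
    unfolding is_mathieu_subspace_def
  proof (intro conjI sub ballI impI)
    fix a b c assume a: "a \<in> carrier A" and pw: "\<forall>m::nat. 1 \<le> m \<longrightarrow> a [^]\<^bsub>A\<^esub> m \<in> M"
      and b: "b \<in> carrier A" and c: "c \<in> carrier A"
    have "a \<in> M" using pw[rule_format, of 1] a by simp
    then have aa: "a \<otimes> a = \<zero>" by (rule sq)
    have p: "a [^] (Suc (Suc k)) = \<zero>" for k
      by (induct k) (use a aa in \<open>auto simp: m_assoc\<close>)
    have "b \<otimes> a [^] m \<otimes> c = \<zero>" if "m \<ge> 2" for m :: nat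
    proof -
      obtain k where "m = Suc (Suc k)" using \<open>m \<ge> 2\<close> by (metis add_2_eq_Suc le_Suc_ex)
      then show ?thesis using p[of k] b c by simp
    qed
    then have "\<forall>m::nat\<ge>2. b \<otimes> a [^] m \<otimes> c = \<zero>" by blast
    then show "\<exists>N. \<forall>m::nat\<ge>N. b \<otimes> a [^] m \<otimes> c \<in> M" using M0 by (metis (no_types, lifting))
  qed
  then have "M = {\<zero>} \<or> M = carrier A" using ss unfolding strongly_simple_def by blast
  moreover have "M \<noteq> carrier A"
  proof
    assume "M = carrier A"
    then have "\<one> \<otimes> \<one> = \<zero>" using sq by auto
    then show False using nonzero by simp
  qed
  ultimately show ?thesis by blast
qed


lemma phi_unit:
  assumes r: "r \<in> carrier R" and r0: "r \<noteq> \<zero>\<^bsub>R\<^esub>"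
  shows "phi r \<in> Units A"
proof -
  interpret ring A by (rule rA)
  have pr: "phi r \<in> carrier A" using phic[OF r] .
  define M where "M = (\<lambda>x. phi r \<otimes> x) ` carrier A"
  have sub: "is_submodule R A phi M"
    unfolding is_submodule_def M_def
  proof (intro conjI ballI)
    show "(\<lambda>x. phi r \<otimes> x) ` carrier A \<subseteq> carrier A" using pr by auto
    show "\<zero> \<in> (\<lambda>x. phi r \<otimes> x) ` carrier A" using pr by (intro image_eqI[of _ _ \<zero>]) auto
  next
    fix x y assume "x \<in> (\<lambda>x. phi r \<otimes> x) ` carrier A" "y \<in> (\<lambda>x. phi r \<otimes> x) ` carrier A"
    then obtain u v where "u \<in> carrier A" "v \<in> carrier A" "x = phi r \<otimes> u" "y = phi r \<otimes> v" by auto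
    then show "x \<oplus> y \<in> (\<lambda>x. phi r \<otimes> x) ` carrier A"
      using pr by (intro image_eqI[of _ _ "u \<oplus> v"]) (auto simp: r_distr)
  next
    fix s x assume s: "s \<in> carrier R" and "x \<in> (\<lambda>x. phi r \<otimes> x) ` carrier A"
    then obtain u where u: "u \<in> carrier A" "x = phi r \<otimes> u" by auto
    have "phi s \<otimes> (phi r \<otimes> u) = phi r \<otimes> (phi s \<otimes> u)"
      using pr phic[OF s] u cen[OF s pr] by (metis m_assoc)
    then show "phi s \<otimes> x \<in> (\<lambda>x. phi r \<otimes> x) ` carrier A"
      using u phic[OF s] by (intro image_eqI[of _ _ "phi s \<otimes> u"]) auto
  qed
  have "M = {\<zero>} \<or> M = carrier A"
  proof (rule ideal_triv[OF sub])
    fix z b c assume "z \<in> M" "b \<in> carrier A" "c \<in> carrier A"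
    then obtain u where u: "u \<in> carrier A" "z = phi r \<otimes> u" unfolding M_def by auto
    have "b \<otimes> z \<otimes> c = phi r \<otimes> (b \<otimes> u \<otimes> c)"
      using u \<open>b \<in> carrier A\<close> \<open>c \<in> carrier A\<close> pr cen[OF r, of b] by (metis m_assoc m_closed)
    then show "b \<otimes> z \<otimes> c \<in> M" unfolding M_def using u \<open>b \<in> carrier A\<close> \<open>c \<in> carrier A\<close> by auto
  qed
  moreover have "phi r \<in> M" unfolding M_def using pr by (intro image_eqI[of _ _ \<one>]) auto
  moreover have "phi r \<noteq> \<zero>" using phi_inj0 r r0 by blast
  ultimately have "\<one> \<in> M" by auto
  then obtain x where x: "x \<in> carrier A" "\<one> = phi r \<otimes> x" unfolding M_def by auto
  moreover have "x \<otimes> phi r = \<one>" using x cen[OF r x(1)] by simp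
  ultimately show ?thesis using pr unfolding Units_def by auto
qed

lemma domR: "domain R"
proof -
  interpret ring A by (rule rA)
  show ?thesis
  proof (rule domain.intro[OF cR], rule domain_axioms.intro)
    show "\<one>\<^bsub>R\<^esub> \<noteq> \<zero>\<^bsub>R\<^esub>" using phi1 phi0 nonzero by auto
  next
    fix a b assume ab: "a \<otimes>\<^bsub>R\<^esub> b = \<zero>\<^bsub>R\<^esub>" "a \<in> carrier R" "b \<in> carrier R"
    show "a = \<zero>\<^bsub>R\<^esub> \<or> b = \<zero>\<^bsub>R\<^esub>"
    proof (cases "a = \<zero>\<^bsub>R\<^esub>")
      case True then show ?thesis by simp
    next
      case False
      then have a0: "a \<noteq> \<zero>\<^bsub>R\<^esub>" .
      have u: "phi a \<in> Units A" using phi_unit ab(2) a0 by blast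
      have pa: "phi a \<in> carrier A" and pb: "phi b \<in> carrier A" using phic ab by auto
      have "phi a \<otimes> phi b = \<zero>" using phim[OF ab(2,3)] ab(1) phi0 by simp
      then have "inv (phi a) \<otimes> (phi a \<otimes> phi b) = \<zero>" using u by simp
      moreover have "inv (phi a) \<otimes> (phi a \<otimes> phi b) = phi b"
        using u pa pb by (simp add: m_assoc[symmetric])
      ultimately have "phi b = \<zero>" by simp
      then show ?thesis using phi_inj0 ab(3) by blast
    qed
  qed
qed

lemma diff0_eq:
  assumes "a \<in> carrier A" "b \<in> carrier A" "a \<ominus> b = \<zero>"
  shows "a = b"
proof -
  interpret ring A by (rule rA)
  have "a = a \<ominus> b \<oplus> b" using assms(1,2) by (simp add: minus_eq add.m_assoc l_neg)
  then show ?thesis using assms by simp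
qed

lemma sandwich_sub:
  assumes p: "p \<in> carrier A" and q: "q \<in> carrier A"
  shows "is_submodule R A phi ((\<lambda>w. p \<otimes> w \<otimes> q) ` carrier A)"
proof -
  interpret ring A by (rule rA)
  show ?thesis
  unfolding is_submodule_def
  proof (intro conjI ballI)
    show "(\<lambda>w. p \<otimes> w \<otimes> q) ` carrier A \<subseteq> carrier A" using p q by auto
    show "\<zero> \<in> (\<lambda>w. p \<otimes> w \<otimes> q) ` carrier A" using p q by (intro image_eqI[of _ _ \<zero>]) auto
  next
    fix x y assume "x \<in> (\<lambda>w. p \<otimes> w \<otimes> q) ` carrier A" "y \<in> (\<lambda>w. p \<otimes> w \<otimes> q) ` carrier A"
    then obtain u v where "u \<in> carrier A" "v \<in> carrier A" "x = p \<otimes> u \<otimes> q" "y = p \<otimes> v \<otimes> q" by auto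
    then show "x \<oplus> y \<in> (\<lambda>w. p \<otimes> w \<otimes> q) ` carrier A"
      using p q by (intro image_eqI[of _ _ "u \<oplus> v"]) (auto simp: r_distr l_distr)
  next
    fix s x assume s: "s \<in> carrier R" and "x \<in> (\<lambda>w. p \<otimes> w \<otimes> q) ` carrier A"
    then obtain u where u: "u \<in> carrier A" "x = p \<otimes> u \<otimes> q" by auto
    have "phi s \<otimes> (p \<otimes> u \<otimes> q) = p \<otimes> (phi s \<otimes> u) \<otimes> q"
      using p q phic[OF s] u cen[OF s p] by (metis m_assoc m_closed)
    then show "phi s \<otimes> x \<in> (\<lambda>w. p \<otimes> w \<otimes> q) ` carrier A"
      using u phic[OF s] by (intro image_eqI[of _ _ "phi s \<otimes> u"]) auto
  qed
qed

lemma sq0_elem: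
  assumes x: "x \<in> carrier A" and xx: "x \<otimes> x = \<zero>"
  shows "x = \<zero>"
proof -
  interpret ring A by (rule rA)
  interpret R: cring R by (rule cR)
  define M where "M = (\<lambda>r. phi r \<otimes> x) ` carrier R"
  have sub: "is_submodule R A phi M"
    unfolding is_submodule_def M_def
  proof (intro conjI ballI)
    show "(\<lambda>r. phi r \<otimes> x) ` carrier R \<subseteq> carrier A" using x phic by auto
    show "\<zero> \<in> (\<lambda>r. phi r \<otimes> x) ` carrier R" using x phi0 by (intro image_eqI[of _ _ "\<zero>\<^bsub>R\<^esub>"]) auto
  next
    fix u v assume "u \<in> (\<lambda>r. phi r \<otimes> x) ` carrier R" "v \<in> (\<lambda>r. phi r \<otimes> x) ` carrier R"
    then obtain r s where "r \<in> carrier R" "s \<in> carrier R" "u = phi r \<otimes> x" "v = phi s \<otimes> x" by auto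
    then show "u \<oplus> v \<in> (\<lambda>r. phi r \<otimes> x) ` carrier R"
      using x by (intro image_eqI[of _ _ "r \<oplus>\<^bsub>R\<^esub> s"]) (auto simp: l_distr phia phic)
  next
    fix t u assume t: "t \<in> carrier R" and "u \<in> (\<lambda>r. phi r \<otimes> x) ` carrier R"
    then obtain r where r: "r \<in> carrier R" "u = phi r \<otimes> x" by auto
    then show "phi t \<otimes> u \<in> (\<lambda>r. phi r \<otimes> x) ` carrier R"
      using x t by (intro image_eqI[of _ _ "t \<otimes>\<^bsub>R\<^esub> r"]) (auto simp: phim phic m_assoc)
  qed
  have "M = {\<zero>}"
  proof (rule sq0_triv[OF sub])
    fix z assume "z \<in> M"
    then obtain r where r: "r \<in> carrier R" "z = phi r \<otimes> x" unfolding M_def by auto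
    have "z \<otimes> z = phi r \<otimes> phi r \<otimes> (x \<otimes> x)"
      using r x phic[OF r(1)] cen[OF r(1) x] by (metis m_assoc m_closed)
    then show "z \<otimes> z = \<zero>" using xx r phic[OF r(1)] by simp
  qed
  moreover have "x \<in> M" unfolding M_def using x phi1 by (intro image_eqI[of _ _ "\<one>\<^bsub>R\<^esub>"]) auto
  ultimately show ?thesis by auto
qed

lemma idem_elem:
  assumes y: "y \<in> carrier A" and yy: "y \<otimes> y = y"
  shows "y = \<zero> \<or> y = \<one>"
proof -
  interpret ring A by (rule rA)
  define e where "e = \<one> \<ominus> y"
  have e: "e \<in> carrier A" using y unfolding e_def by simp
  have ey: "e \<otimes> y = \<zero>" using y yy unfolding e_def
    by (simp add: minus_eq l_distr l_minus r_neg)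
  have ye: "y \<otimes> e = \<zero>" using y yy unfolding e_def
    by (simp add: minus_eq r_distr r_minus r_neg)
  have M1: "(\<lambda>w. y \<otimes> w \<otimes> e) ` carrier A = {\<zero>}"
  proof (rule sq0_triv[OF sandwich_sub[OF y e]])
    fix z assume "z \<in> (\<lambda>w. y \<otimes> w \<otimes> e) ` carrier A"
    then obtain u where u: "u \<in> carrier A" "z = y \<otimes> u \<otimes> e" by auto
    have "z \<otimes> z = y \<otimes> u \<otimes> (e \<otimes> y) \<otimes> u \<otimes> e" using u y e by (simp add: m_assoc)
    then show "z \<otimes> z = \<zero>" using ey u y e by simp
  qed
  have M2: "(\<lambda>w. e \<otimes> w \<otimes> y) ` carrier A = {\<zero>}"
  proof (rule sq0_triv[OF sandwich_sub[OF e y]])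
    fix z assume "z \<in> (\<lambda>w. e \<otimes> w \<otimes> y) ` carrier A"
    then obtain u where u: "u \<in> carrier A" "z = e \<otimes> u \<otimes> y" by auto
    have "z \<otimes> z = e \<otimes> u \<otimes> (y \<otimes> e) \<otimes> u \<otimes> y" using u y e by (simp add: m_assoc)
    then show "z \<otimes> z = \<zero>" using ye u y e by simp
  qed
  have central: "y \<otimes> w = w \<otimes> y" if w: "w \<in> carrier A" for w
  proof -
    have "y \<otimes> w \<otimes> e = \<zero>" using M1 w by auto
    moreover have "y \<otimes> w \<otimes> e = y \<otimes> w \<ominus> y \<otimes> w \<otimes> y"
      using y w unfolding e_def by (simp add: minus_eq r_distr r_minus)
    ultimately have 1: "y \<otimes> w = y \<otimes> w \<otimes> y" using y w diff0_eq[of "y \<otimes> w" "y \<otimes> w \<otimes> y"] by simp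
    have "e \<otimes> w \<otimes> y = \<zero>" using M2 w by auto
    moreover have "e \<otimes> w \<otimes> y = w \<otimes> y \<ominus> y \<otimes> w \<otimes> y"
      using y w unfolding e_def by (simp add: minus_eq l_distr l_minus)
    ultimately have 2: "w \<otimes> y = y \<otimes> w \<otimes> y" using y w diff0_eq[of "w \<otimes> y" "y \<otimes> w \<otimes> y"] by simp
    show ?thesis by (rule trans[OF 1 2[symmetric]])
  qed
  have "(\<lambda>w. y \<otimes> w \<otimes> \<one>) ` carrier A = {\<zero>} \<or> (\<lambda>w. y \<otimes> w \<otimes> \<one>) ` carrier A = carrier A"
  proof (rule ideal_triv[OF sandwich_sub[OF y one_closed]])
    fix z b c assume "z \<in> (\<lambda>w. y \<otimes> w \<otimes> \<one>) ` carrier A" and b: "b \<in> carrier A" and c: "c \<in> carrier A"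
    then obtain u where u: "u \<in> carrier A" "z = y \<otimes> u \<otimes> \<one>" by auto
    have "b \<otimes> z \<otimes> c = b \<otimes> (y \<otimes> u) \<otimes> c" using u y by simp
    also have "\<dots> = (b \<otimes> y) \<otimes> u \<otimes> c" using u y b c by (simp add: m_assoc)
    also have "\<dots> = (y \<otimes> b) \<otimes> u \<otimes> c" using central[OF b] by simp
    also have "\<dots> = y \<otimes> (b \<otimes> u \<otimes> c) \<otimes> \<one>" using u y b c by (simp add: m_assoc)
    finally have "b \<otimes> z \<otimes> c = y \<otimes> (b \<otimes> u \<otimes> c) \<otimes> \<one>" .
    then show "b \<otimes> z \<otimes> c \<in> (\<lambda>w. y \<otimes> w \<otimes> \<one>) ` carrier A" using u b c by auto
  qed
  then show ?thesis
  proof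
    assume "(\<lambda>w. y \<otimes> w \<otimes> \<one>) ` carrier A = {\<zero>}"
    then have "y \<otimes> \<one> \<otimes> \<one> = \<zero>" by auto
    then show ?thesis using y by simp
  next
    assume "(\<lambda>w. y \<otimes> w \<otimes> \<one>) ` carrier A = carrier A"
    then have "\<one> \<in> (\<lambda>w. y \<otimes> w \<otimes> \<one>) ` carrier A" by simp
    then obtain w where w: "w \<in> carrier A" "\<one> = y \<otimes> w \<otimes> \<one>" by blast
    then have "\<one> = y \<otimes> w" using y by simp
    then have "y = y \<otimes> (y \<otimes> w)" using y by (simp add: \<open>\<one> = y \<otimes> w\<close>[symmetric])
    also have "\<dots> = (y \<otimes> y) \<otimes> w" using y w by (simp add: m_assoc)
    also have "\<dots> = \<one>" using yy \<open>\<one> = y \<otimes> w\<close> by simp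
    finally show ?thesis by simp
  qed
qed


lemma unit_cancel0:
  assumes u: "u \<in> Units A" and z: "z \<in> carrier A" and e: "u \<otimes> z = \<zero>"
  shows "z = \<zero>"
proof -
  interpret ring A by (rule rA)
  have uc: "u \<in> carrier A" and vc: "inv u \<in> carrier A" using u by auto
  have "z = (inv u \<otimes> u) \<otimes> z" using u z by simp
  also have "\<dots> = inv u \<otimes> (u \<otimes> z)" using uc vc z by (simp add: m_assoc)
  also have "\<dots> = \<zero>" using e vc by simp
  finally show ?thesis .
qed

lemma inv_central:
  assumes u: "u \<in> Units A" and c: "\<And>w. w \<in> carrier A \<Longrightarrow> u \<otimes> w = w \<otimes> u"
    and w: "w \<in> carrier A"
  shows "inv u \<otimes> w = w \<otimes> inv u"
proof -
  interpret ring A by (rule rA)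
  have uc: "u \<in> carrier A" and vc: "inv u \<in> carrier A" using u by auto
  have "inv u \<otimes> w = inv u \<otimes> w \<otimes> (u \<otimes> inv u)" using u w by simp
  also have "\<dots> = inv u \<otimes> (w \<otimes> u) \<otimes> inv u" using uc vc w by (simp add: m_assoc)
  also have "\<dots> = inv u \<otimes> (u \<otimes> w) \<otimes> inv u" using c[OF w] by simp
  also have "\<dots> = (inv u \<otimes> u) \<otimes> w \<otimes> inv u" using uc vc w by (simp add: m_assoc)
  also have "\<dots> = w \<otimes> inv u" using u w by simp
  finally show ?thesis .
qed

lemma quad_K:
  assumes x: "x \<in> carrier A" and al: "\<alpha> \<in> carrier R" "\<alpha> \<noteq> \<zero>\<^bsub>R\<^esub>" and be: "\<beta> \<in> carrier R"
    and eq: "phi \<alpha> \<otimes> (x \<otimes> x) = phi \<beta> \<otimes> x"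
  shows "\<exists>r s. r \<in> carrier R \<and> s \<in> carrier R \<and> s \<noteq> \<zero>\<^bsub>R\<^esub> \<and> phi s \<otimes> x = phi r"
proof -
  interpret ring A by (rule rA)
  have ua: "phi \<alpha> \<in> Units A" using phi_unit al by blast
  have pa: "phi \<alpha> \<in> carrier A" and pb: "phi \<beta> \<in> carrier A" using phic al be by auto
  have zero_case: ?thesis if "x = \<zero>"
  proof (intro exI conjI)
    show "\<zero>\<^bsub>R\<^esub> \<in> carrier R" "\<one>\<^bsub>R\<^esub> \<in> carrier R"
      using cring.axioms(1)[OF cR] ring.ring_simprules(2,6) by blast+
    show "\<one>\<^bsub>R\<^esub> \<noteq> \<zero>\<^bsub>R\<^esub>" using phi1 phi0 nonzero by auto
    show "phi \<one>\<^bsub>R\<^esub> \<otimes> x = phi \<zero>\<^bsub>R\<^esub>" using that phi0 phi1 by simp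
  qed
  show ?thesis
  proof (cases "\<beta> = \<zero>\<^bsub>R\<^esub>")
    case True
    then have "phi \<alpha> \<otimes> (x \<otimes> x) = \<zero>" using eq phi0 x by simp
    then have "x \<otimes> x = \<zero>" using unit_cancel0[OF ua] x by simp
    then show ?thesis using sq0_elem x zero_case by blast
  next
    case False
    have ub: "phi \<beta> \<in> Units A" using phi_unit be False by blast
    define v where "v = inv (phi \<beta>)"
    have vc: "v \<in> carrier A" using ub unfolding v_def by simp
    have vcen: "v \<otimes> w = w \<otimes> v" if "w \<in> carrier A" for w
      unfolding v_def by (rule inv_central[OF ub _ that]) (rule cen[OF be])
    have vb: "v \<otimes> phi \<beta> = \<one>" "phi \<beta> \<otimes> v = \<one>" using ub unfolding v_def by auto
    define c where "c = phi \<alpha> \<otimes> v"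
    have cc: "c \<in> carrier A" unfolding c_def using pa vc by simp
    have ccen: "c \<otimes> w = w \<otimes> c" if w: "w \<in> carrier A" for w
    proof -
      have "c \<otimes> w = phi \<alpha> \<otimes> (v \<otimes> w)" unfolding c_def using pa vc w by (simp add: m_assoc)
      also have "\<dots> = phi \<alpha> \<otimes> (w \<otimes> v)" using vcen[OF w] by simp
      also have "\<dots> = (phi \<alpha> \<otimes> w) \<otimes> v" using pa vc w by (simp add: m_assoc)
      also have "\<dots> = (w \<otimes> phi \<alpha>) \<otimes> v" using cen[OF al(1) w] by simp
      also have "\<dots> = w \<otimes> c" unfolding c_def using pa vc w by (simp add: m_assoc)
      finally show ?thesis .
    qed
    define y where "y = c \<otimes> x"
    have yc: "y \<in> carrier A" unfolding y_def using cc x by simp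
    have "y \<otimes> y = c \<otimes> (x \<otimes> c) \<otimes> x" unfolding y_def using cc x by (simp add: m_assoc)
    also have "\<dots> = c \<otimes> (c \<otimes> x) \<otimes> x" using ccen[OF x] by simp
    also have "\<dots> = c \<otimes> (phi \<alpha> \<otimes> v) \<otimes> (x \<otimes> x)" unfolding c_def using pa vc x by (simp add: m_assoc)
    also have "\<dots> = c \<otimes> (v \<otimes> phi \<alpha>) \<otimes> (x \<otimes> x)" using vcen[OF pa] by simp
    also have "\<dots> = c \<otimes> v \<otimes> (phi \<alpha> \<otimes> (x \<otimes> x))" using cc pa vc x by (simp add: m_assoc)
    also have "\<dots> = c \<otimes> v \<otimes> (phi \<beta> \<otimes> x)" using eq by simp
    also have "\<dots> = c \<otimes> (v \<otimes> phi \<beta>) \<otimes> x" using cc pb vc x by (simp add: m_assoc)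
    also have "\<dots> = y" unfolding y_def using vb cc by simp
    finally have "y \<otimes> y = y" .
    then have yy: "y = \<zero> \<or> y = \<one>" using idem_elem yc by blast
    have key: "phi \<beta> \<otimes> y = phi \<alpha> \<otimes> x"
    proof -
      have "phi \<beta> \<otimes> y = phi \<beta> \<otimes> (phi \<alpha> \<otimes> v) \<otimes> x" unfolding y_def c_def using pb pa vc x by (simp add: m_assoc)
      also have "\<dots> = phi \<beta> \<otimes> (v \<otimes> phi \<alpha>) \<otimes> x" using vcen[OF pa] by simp
      also have "\<dots> = (phi \<beta> \<otimes> v) \<otimes> phi \<alpha> \<otimes> x" using pb pa vc x by (simp add: m_assoc)
      also have "\<dots> = phi \<alpha> \<otimes> x" using vb pa x by simp
      finally show ?thesis .
    qed
    from yy show ?thesis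
    proof
      assume "y = \<zero>"
      then have "phi \<alpha> \<otimes> x = \<zero>" using key pb by simp
      then have "x = \<zero>" using unit_cancel0[OF ua x] by simp
      then show ?thesis using zero_case by simp
    next
      assume "y = \<one>"
      then have "phi \<alpha> \<otimes> x = phi \<beta>" using key pb by simp
      then show ?thesis using al be by auto
    qed
  qed
qed

lemma cen_mult:
  assumes r: "r \<in> carrier R" and t: "t \<in> carrier R" and u: "u \<in> carrier A" and w: "w \<in> carrier A"
  shows "(phi r \<otimes> u) \<otimes> (phi t \<otimes> w) = phi (r \<otimes>\<^bsub>R\<^esub> t) \<otimes> (u \<otimes> w)"
proof -
  interpret ring A by (rule rA)
  have pr: "phi r \<in> carrier A" and pt: "phi t \<in> carrier A" using phic r t by auto
  have "(phi r \<otimes> u) \<otimes> (phi t \<otimes> w) = phi r \<otimes> ((u \<otimes> phi t) \<otimes> w)" using pr pt u w by (simp add: m_assoc)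
  also have "\<dots> = phi r \<otimes> ((phi t \<otimes> u) \<otimes> w)" using cen[OF t u] by simp
  also have "\<dots> = (phi r \<otimes> phi t) \<otimes> (u \<otimes> w)" using pr pt u w by (simp add: m_assoc)
  also have "\<dots> = phi (r \<otimes>\<^bsub>R\<^esub> t) \<otimes> (u \<otimes> w)" using phim[OF r t] by simp
  finally show ?thesis .
qed

lemma phi_comm:
  assumes r: "r \<in> carrier R" and t: "t \<in> carrier R" and w: "w \<in> carrier A"
  shows "phi r \<otimes> (phi t \<otimes> w) = phi t \<otimes> (phi r \<otimes> w)"
proof -
  interpret ring A by (rule rA)
  have pr: "phi r \<in> carrier A" and pt: "phi t \<in> carrier A" using phic r t by auto
  have "phi r \<otimes> (phi t \<otimes> w) = (phi r \<otimes> phi t) \<otimes> w" using pr pt w by (simp add: m_assoc)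
  also have "\<dots> = (phi t \<otimes> phi r) \<otimes> w" using cen[OF r pt] by simp
  also have "\<dots> = phi t \<otimes> (phi r \<otimes> w)" using pr pt w by (simp add: m_assoc)
  finally show ?thesis .
qed

lemma all_K:
  assumes x: "x \<in> carrier A"
  shows "\<exists>r s. r \<in> carrier R \<and> s \<in> carrier R \<and> s \<noteq> \<zero>\<^bsub>R\<^esub> \<and> phi s \<otimes> x = phi r"
proof -
  interpret ring A by (rule rA)
  interpret R: domain R by (rule domR)
  have zero_case: ?thesis if "x = \<zero>"
  proof (intro exI conjI)
    show "\<zero>\<^bsub>R\<^esub> \<in> carrier R" "\<one>\<^bsub>R\<^esub> \<in> carrier R" by simp_all
    show "\<one>\<^bsub>R\<^esub> \<noteq> \<zero>\<^bsub>R\<^esub>" by simp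
    show "phi \<one>\<^bsub>R\<^esub> \<otimes> x = phi \<zero>\<^bsub>R\<^esub>" using that phi0 phi1 by simp
  qed
  define K where "K = {w \<in> carrier A. \<exists>s r. s \<in> carrier R \<and> s \<noteq> \<zero>\<^bsub>R\<^esub> \<and> r \<in> carrier R \<and> phi s \<otimes> w = phi r \<otimes> x}"
  have sub: "is_submodule R A phi K"
    unfolding is_submodule_def
  proof (intro conjI ballI)
    show "K \<subseteq> carrier A" unfolding K_def by auto
    show "\<zero> \<in> K" unfolding K_def using x phi0 phi1 phic
      by (intro CollectI conjI exI[of _ "\<one>\<^bsub>R\<^esub>"] exI[of _ "\<zero>\<^bsub>R\<^esub>"]) auto
  next
    fix w1 w2 assume "w1 \<in> K" "w2 \<in> K"
    then obtain s1 r1 s2 r2 where w: "w1 \<in> carrier A" "w2 \<in> carrier A"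
      and s1: "s1 \<in> carrier R" "s1 \<noteq> \<zero>\<^bsub>R\<^esub>" "r1 \<in> carrier R" "phi s1 \<otimes> w1 = phi r1 \<otimes> x"
      and s2: "s2 \<in> carrier R" "s2 \<noteq> \<zero>\<^bsub>R\<^esub>" "r2 \<in> carrier R" "phi s2 \<otimes> w2 = phi r2 \<otimes> x"
      unfolding K_def by auto
    have "phi (s1 \<otimes>\<^bsub>R\<^esub> s2) \<otimes> w1 = phi s2 \<otimes> (phi s1 \<otimes> w1)"
      using s1 s2 w phic by (simp add: phim R.m_comm[of s1 s2] m_assoc)
    also have "\<dots> = phi (s2 \<otimes>\<^bsub>R\<^esub> r1) \<otimes> x" using s1 s2 x phic by (simp add: phim m_assoc)
    finally have e1: "phi (s1 \<otimes>\<^bsub>R\<^esub> s2) \<otimes> w1 = phi (s2 \<otimes>\<^bsub>R\<^esub> r1) \<otimes> x" .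
    have "phi (s1 \<otimes>\<^bsub>R\<^esub> s2) \<otimes> w2 = phi s1 \<otimes> (phi s2 \<otimes> w2)"
      using s1 s2 w phic by (simp add: phim m_assoc)
    also have "\<dots> = phi (s1 \<otimes>\<^bsub>R\<^esub> r2) \<otimes> x" using s1 s2 x phic by (simp add: phim m_assoc)
    finally have e2: "phi (s1 \<otimes>\<^bsub>R\<^esub> s2) \<otimes> w2 = phi (s1 \<otimes>\<^bsub>R\<^esub> r2) \<otimes> x" .
    have "phi (s1 \<otimes>\<^bsub>R\<^esub> s2) \<otimes> (w1 \<oplus> w2) = phi ((s2 \<otimes>\<^bsub>R\<^esub> r1) \<oplus>\<^bsub>R\<^esub> (s1 \<otimes>\<^bsub>R\<^esub> r2)) \<otimes> x"
      using e1 e2 s1 s2 w x phic by (simp add: r_distr l_distr phia)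
    moreover have "s1 \<otimes>\<^bsub>R\<^esub> s2 \<noteq> \<zero>\<^bsub>R\<^esub>" using s1 s2 R.integral by blast
    ultimately show "w1 \<oplus> w2 \<in> K" unfolding K_def using w s1 s2
      by (intro CollectI conjI exI[of _ "s1 \<otimes>\<^bsub>R\<^esub> s2"] exI[of _ "(s2 \<otimes>\<^bsub>R\<^esub> r1) \<oplus>\<^bsub>R\<^esub> (s1 \<otimes>\<^bsub>R\<^esub> r2)"]) auto
  next
    fix t w assume t: "t \<in> carrier R" and "w \<in> K"
    then obtain s r where w: "w \<in> carrier A"
      and s: "s \<in> carrier R" "s \<noteq> \<zero>\<^bsub>R\<^esub>" "r \<in> carrier R" "phi s \<otimes> w = phi r \<otimes> x"
      unfolding K_def by auto
    have "phi s \<otimes> (phi t \<otimes> w) = phi t \<otimes> (phi s \<otimes> w)" using phi_comm[OF s(1) t w] .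
    also have "\<dots> = phi (t \<otimes>\<^bsub>R\<^esub> r) \<otimes> x" using s t x phic by (simp add: phim m_assoc)
    finally show "phi t \<otimes> w \<in> K" unfolding K_def using s t w phic
      by (intro CollectI conjI exI[of _ s] exI[of _ "t \<otimes>\<^bsub>R\<^esub> r"]) auto
  qed
  have xK: "x \<in> K" unfolding K_def using x phi1
    by (intro CollectI conjI exI[of _ "\<one>\<^bsub>R\<^esub>"] exI[of _ "\<one>\<^bsub>R\<^esub>"]) auto
  show ?thesis
  proof (cases "is_mathieu_subspace R A phi K")
    case True
    then have "K = {\<zero>} \<or> K = carrier A" using ss unfolding strongly_simple_def by blast
    then show ?thesis
    proof
      assume "K = {\<zero>}" then show ?thesis using xK zero_case by auto
    next
      assume "K = carrier A"
      then have "\<one> \<in> K" by simp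
      then obtain s r where s: "s \<in> carrier R" "s \<noteq> \<zero>\<^bsub>R\<^esub>" "r \<in> carrier R" "phi s \<otimes> \<one> = phi r \<otimes> x"
        unfolding K_def by auto
      have ps: "phi s = phi r \<otimes> x" using s phic by simp
      have "r \<noteq> \<zero>\<^bsub>R\<^esub>"
      proof
        assume "r = \<zero>\<^bsub>R\<^esub>"
        then have "phi s = \<zero>" using ps phi0 x by simp
        then show False using phi_inj0 s by blast
      qed
      then show ?thesis using s ps by (intro exI[of _ s] exI[of _ r]) auto
    qed
  next
    case False
    then obtain a b c where a: "a \<in> carrier A" and pw: "\<forall>m::nat. m \<ge> 1 \<longrightarrow> a [^] m \<in> K"
      and b: "b \<in> carrier A" and c: "c \<in> carrier A"
      and nN: "\<not> (\<exists>N::nat. \<forall>m\<ge>N. b \<otimes> (a [^] m) \<otimes> c \<in> K)"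
      using sub unfolding is_mathieu_subspace_def by blast
    have "a [^] (1::nat) \<in> K" using pw by blast
    then have "a \<in> K" using a by simp
    then obtain s r where s: "s \<in> carrier R" "s \<noteq> \<zero>\<^bsub>R\<^esub>" "r \<in> carrier R" "phi s \<otimes> a = phi r \<otimes> x"
      unfolding K_def by auto
    have "a [^] (2::nat) \<in> K" using pw by (metis one_le_numeral)
    then have "a \<otimes> a \<in> K" using a by (simp add: numeral_2_eq_2)
    then obtain s2 r2 where s2: "s2 \<in> carrier R" "s2 \<noteq> \<zero>\<^bsub>R\<^esub>" "r2 \<in> carrier R" "phi s2 \<otimes> (a \<otimes> a) = phi r2 \<otimes> x"
      unfolding K_def by auto
    have r0: "r \<noteq> \<zero>\<^bsub>R\<^esub>"
    proof
      assume "r = \<zero>\<^bsub>R\<^esub>"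
      then have "phi s \<otimes> a = \<zero>" using s phi0 x by simp
      then have a0: "a = \<zero>" using unit_cancel0[OF phi_unit[OF s(1,2)] a] by simp
      have "b \<otimes> (a [^] m) \<otimes> c \<in> K" if m1: "m \<ge> 1" for m :: nat
      proof -
        obtain k where "m = Suc k" using m1 by (cases m) auto
        then have "a [^] m = \<zero>" using a0 by simp
        then show ?thesis using b c sub unfolding is_submodule_def by simp
      qed
      then show False using nN by blast
    qed
    have pr: "phi r \<in> carrier A" and pS: "phi s \<in> carrier A" and pS2: "phi s2 \<in> carrier A"
      and pR2: "phi r2 \<in> carrier A" using phic s s2 by auto
    have "phi (s2 \<otimes>\<^bsub>R\<^esub> (r \<otimes>\<^bsub>R\<^esub> r)) \<otimes> (x \<otimes> x) = phi s2 \<otimes> (phi (r \<otimes>\<^bsub>R\<^esub> r) \<otimes> (x \<otimes> x))"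
      using s s2 x phic by (simp add: phim m_assoc)
    also have "\<dots> = phi s2 \<otimes> ((phi r \<otimes> x) \<otimes> (phi r \<otimes> x))" using cen_mult[OF s(3) s(3) x x] by simp
    also have "\<dots> = phi s2 \<otimes> ((phi s \<otimes> a) \<otimes> (phi s \<otimes> a))" using s(4) by simp
    also have "\<dots> = phi s2 \<otimes> (phi (s \<otimes>\<^bsub>R\<^esub> s) \<otimes> (a \<otimes> a))" using cen_mult[OF s(1) s(1) a a] by simp
    also have "\<dots> = phi (s \<otimes>\<^bsub>R\<^esub> s) \<otimes> (phi s2 \<otimes> (a \<otimes> a))" using phi_comm[OF s2(1) R.m_closed[OF s(1) s(1)] m_closed[OF a a]] .
    also have "\<dots> = phi ((s \<otimes>\<^bsub>R\<^esub> s) \<otimes>\<^bsub>R\<^esub> r2) \<otimes> x" using s s2 x phic by (simp add: phim m_assoc)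
    finally have eq: "phi (s2 \<otimes>\<^bsub>R\<^esub> (r \<otimes>\<^bsub>R\<^esub> r)) \<otimes> (x \<otimes> x) = phi ((s \<otimes>\<^bsub>R\<^esub> s) \<otimes>\<^bsub>R\<^esub> r2) \<otimes> x" .
    have "s2 \<otimes>\<^bsub>R\<^esub> (r \<otimes>\<^bsub>R\<^esub> r) \<noteq> \<zero>\<^bsub>R\<^esub>" using s2 s r0 R.integral by (metis R.m_closed)
    then show ?thesis using quad_K[OF x _ _ _ eq] s s2 by simp
  qed
qed

lemma unit_cancel:
  assumes u: "u \<in> Units A" and x: "x \<in> carrier A" and y: "y \<in> carrier A" and e: "u \<otimes> x = u \<otimes> y"
  shows "x = y"
proof -
  interpret ring A by (rule rA)
  have uc: "u \<in> carrier A" and vc: "inv u \<in> carrier A" using u by auto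
  have "x = (inv u \<otimes> u) \<otimes> x" using u x by simp
  also have "\<dots> = inv u \<otimes> (u \<otimes> y)" using uc vc x e by (simp add: m_assoc)
  also have "\<dots> = (inv u \<otimes> u) \<otimes> y" using uc vc y by (simp add: m_assoc)
  also have "\<dots> = y" using u y by simp
  finally show ?thesis .
qed

lemma scale_rep:
  assumes x: "x \<in> carrier A"
    and a: "r \<in> carrier R" "s \<in> carrier R" "phi s \<otimes> x = phi r" and t: "t \<in> carrier R"
  shows "phi (s \<otimes>\<^bsub>R\<^esub> t) \<otimes> x = phi (r \<otimes>\<^bsub>R\<^esub> t)"
proof -
  interpret ring A by (rule rA)
  interpret R: cring R by (rule cR)
  have "phi (s \<otimes>\<^bsub>R\<^esub> t) \<otimes> x = phi t \<otimes> (phi s \<otimes> x)"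
    using a t x phic by (simp add: phim R.m_comm[of s t] m_assoc)
  also have "\<dots> = phi (r \<otimes>\<^bsub>R\<^esub> t)" using a t by (simp add: phim R.m_comm[of r t])
  finally show ?thesis .
qed

lemma f_rep:
  assumes x: "x \<in> carrier A"
    and a: "r \<in> carrier R" "s \<in> carrier R" "s \<noteq> \<zero>\<^bsub>R\<^esub>" "phi s \<otimes> x = phi r"
  shows "frrep R A phi x = frac_class R (r, s)"
proof -
  interpret R: domain R by (rule domR)
  let ?P = "\<lambda>p. fst p \<in> carrier R \<and> snd p \<in> carrier R \<and> snd p \<noteq> \<zero>\<^bsub>R\<^esub> \<and> phi (snd p) \<otimes> x = phi (fst p)"
  have "?P (r, s)" using a by simp
  then have P: "?P (SOME p. ?P p)" by (rule someI)
  obtain r' s' where p: "(SOME p. ?P p) = (r', s')" by (cases "SOME p. ?P p")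
  have b: "r' \<in> carrier R" "s' \<in> carrier R" "s' \<noteq> \<zero>\<^bsub>R\<^esub>" "phi s' \<otimes> x = phi r'" using P p by auto
  have "phi (r' \<otimes>\<^bsub>R\<^esub> s) = phi (r \<otimes>\<^bsub>R\<^esub> s')"
    using scale_rep[OF x b(1,2,4) a(2)] scale_rep[OF x a(1,2,4) b(2)] R.m_comm[OF a(2) b(2)] by simp
  then have "r' \<otimes>\<^bsub>R\<^esub> s = r \<otimes>\<^bsub>R\<^esub> s'" using inj a b unfolding inj_on_def by simp
  then show ?thesis unfolding frrep_def p using fc_eq[OF domR b(1,2,3) a(1,2,3)] by simp
qed

lemma f_ex:
  assumes x: "x \<in> carrier A"
  obtains r s where "r \<in> carrier R" "s \<in> carrier R" "s \<noteq> \<zero>\<^bsub>R\<^esub>" "phi s \<otimes> x = phi r"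
  using all_K[OF x] by blast

lemma f_iso: "frrep R A phi \<in> ring_iso A (frac_field R)"
proof -
  interpret ring A by (rule rA)
  interpret R: domain R by (rule domR)
  let ?f = "frrep R A phi"
  have fc: "?f x \<in> carrier (frac_field R)" if x: "x \<in> carrier A" for x
  proof -
    obtain r s where rs: "r \<in> carrier R" "s \<in> carrier R" "s \<noteq> \<zero>\<^bsub>R\<^esub>" "phi s \<otimes> x = phi r"
      using f_ex[OF x] .
    then show ?thesis using f_rep[OF x rs] unfolding frac_field_def by auto
  qed
  have fm: "?f (x \<otimes> y) = ?f x \<otimes>\<^bsub>frac_field R\<^esub> ?f y" if x: "x \<in> carrier A" and y: "y \<in> carrier A" for x y
  proof -
    obtain r s where a: "r \<in> carrier R" "s \<in> carrier R" "s \<noteq> \<zero>\<^bsub>R\<^esub>" "phi s \<otimes> x = phi r"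
      using f_ex[OF x] .
    obtain r' s' where b: "r' \<in> carrier R" "s' \<in> carrier R" "s' \<noteq> \<zero>\<^bsub>R\<^esub>" "phi s' \<otimes> y = phi r'"
      using f_ex[OF y] .
    have "phi (s \<otimes>\<^bsub>R\<^esub> s') \<otimes> (x \<otimes> y) = (phi s \<otimes> x) \<otimes> (phi s' \<otimes> y)"
      using cen_mult[OF a(2) b(2) x y] by simp
    also have "\<dots> = phi (r \<otimes>\<^bsub>R\<^esub> r')" using a b by (simp add: phim)
    finally have e: "phi (s \<otimes>\<^bsub>R\<^esub> s') \<otimes> (x \<otimes> y) = phi (r \<otimes>\<^bsub>R\<^esub> r')" .
    have ss: "s \<otimes>\<^bsub>R\<^esub> s' \<noteq> \<zero>\<^bsub>R\<^esub>" using a b R.integral by blast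
    have "?f (x \<otimes> y) = frac_class R (r \<otimes>\<^bsub>R\<^esub> r', s \<otimes>\<^bsub>R\<^esub> s')"
      using f_rep[OF _ _ _ ss e] x y a b by simp
    also have "\<dots> = frac_mult R (frac_class R (r, s)) (frac_class R (r', s'))"
      using fc_mult[OF domR a(1,2,3) b(1,2,3)] by simp
    finally show ?thesis using f_rep[OF x a] f_rep[OF y b] unfolding frac_field_def by simp
  qed
  have fa: "?f (x \<oplus> y) = ?f x \<oplus>\<^bsub>frac_field R\<^esub> ?f y" if x: "x \<in> carrier A" and y: "y \<in> carrier A" for x y
  proof -
    obtain r s where a: "r \<in> carrier R" "s \<in> carrier R" "s \<noteq> \<zero>\<^bsub>R\<^esub>" "phi s \<otimes> x = phi r"
      using f_ex[OF x] .
    obtain r' s' where b: "r' \<in> carrier R" "s' \<in> carrier R" "s' \<noteq> \<zero>\<^bsub>R\<^esub>" "phi s' \<otimes> y = phi r'"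
      using f_ex[OF y] .
    have e1: "phi (s \<otimes>\<^bsub>R\<^esub> s') \<otimes> x = phi (r \<otimes>\<^bsub>R\<^esub> s')" using scale_rep[OF x a(1,2,4) b(2)] .
    have e2: "phi (s \<otimes>\<^bsub>R\<^esub> s') \<otimes> y = phi (r' \<otimes>\<^bsub>R\<^esub> s)"
      using scale_rep[OF y b(1,2,4) a(2)] R.m_comm[OF a(2) b(2)] by simp
    have "phi (s \<otimes>\<^bsub>R\<^esub> s') \<otimes> (x \<oplus> y) = phi (r \<otimes>\<^bsub>R\<^esub> s' \<oplus>\<^bsub>R\<^esub> r' \<otimes>\<^bsub>R\<^esub> s)"
      using e1 e2 a b x y phic by (simp add: r_distr phia)
    moreover have ss: "s \<otimes>\<^bsub>R\<^esub> s' \<noteq> \<zero>\<^bsub>R\<^esub>" using a b R.integral by blast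
    ultimately have "?f (x \<oplus> y) = frac_class R (r \<otimes>\<^bsub>R\<^esub> s' \<oplus>\<^bsub>R\<^esub> r' \<otimes>\<^bsub>R\<^esub> s, s \<otimes>\<^bsub>R\<^esub> s')"
      using f_rep x y a b by simp
    also have "\<dots> = frac_add R (frac_class R (r, s)) (frac_class R (r', s'))"
      using fc_add[OF domR a(1,2,3) b(1,2,3)] by simp
    finally show ?thesis using f_rep[OF x a] f_rep[OF y b] unfolding frac_field_def by simp
  qed
  have f1: "?f \<one> = \<one>\<^bsub>frac_field R\<^esub>"
    using f_rep[of \<one> "\<one>\<^bsub>R\<^esub>" "\<one>\<^bsub>R\<^esub>"] phi1 unfolding frac_field_def by simp
  have inj': "inj_on ?f (carrier A)"
  proof (rule inj_onI)
    fix x y assume x: "x \<in> carrier A" and y: "y \<in> carrier A" and e: "?f x = ?f y"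
    obtain r s where a: "r \<in> carrier R" "s \<in> carrier R" "s \<noteq> \<zero>\<^bsub>R\<^esub>" "phi s \<otimes> x = phi r"
      using f_ex[OF x] .
    obtain r' s' where b: "r' \<in> carrier R" "s' \<in> carrier R" "s' \<noteq> \<zero>\<^bsub>R\<^esub>" "phi s' \<otimes> y = phi r'"
      using f_ex[OF y] .
    have "frac_class R (r, s) = frac_class R (r', s')" using e f_rep[OF x a] f_rep[OF y b] by simp
    then have rr: "r \<otimes>\<^bsub>R\<^esub> s' = r' \<otimes>\<^bsub>R\<^esub> s" using fc_eqD[OF domR a(1,2,3) b(1,2,3)] by simp
    have e1: "phi (s \<otimes>\<^bsub>R\<^esub> s') \<otimes> x = phi (r \<otimes>\<^bsub>R\<^esub> s')" using scale_rep[OF x a(1,2,4) b(2)] .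
    have e2: "phi (s \<otimes>\<^bsub>R\<^esub> s') \<otimes> y = phi (r' \<otimes>\<^bsub>R\<^esub> s)"
      using scale_rep[OF y b(1,2,4) a(2)] R.m_comm[OF a(2) b(2)] by simp
    have ss: "s \<otimes>\<^bsub>R\<^esub> s' \<noteq> \<zero>\<^bsub>R\<^esub>" using a b R.integral by blast
    show "x = y" using unit_cancel[OF phi_unit[OF _ ss] x y] e1 e2 rr a b by simp
  qed
  have surj': "?f ` carrier A = carrier (frac_field R)"
  proof
    show "?f ` carrier A \<subseteq> carrier (frac_field R)" using fc by auto
    show "carrier (frac_field R) \<subseteq> ?f ` carrier A"
    proof
      fix k assume "k \<in> carrier (frac_field R)"
      then obtain r s where rs: "r \<in> carrier R" "s \<in> carrier R" "s \<noteq> \<zero>\<^bsub>R\<^esub>" "k = frac_class R (r, s)"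
        unfolding frac_field_def by auto
      have u: "phi s \<in> Units A" using phi_unit rs by blast
      define x where "x = inv (phi s) \<otimes> phi r"
      have x: "x \<in> carrier A" unfolding x_def using u phic rs by simp
      have "phi s \<otimes> x = (phi s \<otimes> inv (phi s)) \<otimes> phi r" unfolding x_def by (rule m_assoc[symmetric, OF Units_closed[OF u] Units_inv_closed[OF u] phic[OF rs(1)]])
      also have "\<dots> = phi r" using Units_r_inv[OF u] phic[OF rs(1)] by simp
      finally have "phi s \<otimes> x = phi r" .
      then have "?f x = k" using f_rep[OF x rs(1,2,3)] rs by simp
      then show "k \<in> ?f ` carrier A" using x by blast
    qed
  qed
  show ?thesis
    unfolding ring_iso_def ring_hom_def bij_betw_def
    using fc fm fa f1 inj' surj' by auto
qed

lemma f_phi: "r \<in> carrier R \<Longrightarrow> frrep R A phi (phi r) = frac_embed R r"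
proof -
  assume r: "r \<in> carrier R"
  interpret ring A by (rule rA)
  interpret R: domain R by (rule domR)
  show ?thesis unfolding frac_embed_def
    using f_rep[OF phic[OF r] r R.one_closed] phi1 phic[OF r] R.one_not_zero by simp
qed

end

theorem theorem6p2:
  fixes R :: "('r, 'm) ring_scheme" and A :: "('a, 'n) ring_scheme" and phi :: "'r \<Rightarrow> 'a"
  assumes alg: "is_algebra R A phi"
    and nonzero: "\<one>\<^bsub>A\<^esub> \<noteq> \<zero>\<^bsub>A\<^esub>"
    and inj: "inj_on phi (carrier R)"
  shows "strongly_simple R A phi \<longleftrightarrow>
           (domain R \<and>
            algebra_iso R A phi (frac_field R) (frac_embed R) \<and>
            strongly_simple R (frac_field R) (frac_embed R))"
proof -
  have rA: "ring A" and cR: "cring R" and hom: "phi \<in> ring_hom R A"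
    using alg unfolding is_algebra_def by auto
  interpret ring A by (rule rA)
  have phic: "\<And>r. r \<in> carrier R \<Longrightarrow> phi r \<in> carrier A" using hom unfolding ring_hom_def by auto
  have phi0: "phi \<zero>\<^bsub>R\<^esub> = \<zero>\<^bsub>A\<^esub>" using ring_hom_zero[OF hom cring.axioms(1)[OF cR] rA] .
  have R0: "\<zero>\<^bsub>R\<^esub> \<in> carrier R" using cring.axioms(1)[OF cR] ring.ring_simprules(2) by blast
  have K0: "frac_embed R \<zero>\<^bsub>R\<^esub> = \<zero>\<^bsub>frac_field R\<^esub>" unfolding frac_embed_def frac_field_def by simp
  show ?thesis
  proof
    assume ss: "strongly_simple R A phi"
    let ?f = "frrep R A phi"
    have dom: "domain R" using domR[OF alg nonzero inj ss] .
    have iso: "?f \<in> ring_iso A (frac_field R)" using f_iso[OF alg nonzero inj ss] .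
    have fphi: "\<And>r. r \<in> carrier R \<Longrightarrow> ?f (phi r) = frac_embed R r" using f_phi[OF alg nonzero inj ss] .
    have hm: "?f \<in> ring_hom A (frac_field R)" and bij: "bij_betw ?f (carrier A) (carrier (frac_field R))"
      using iso unfolding ring_iso_def by auto
    have "?f \<zero>\<^bsub>A\<^esub> = \<zero>\<^bsub>frac_field R\<^esub>" using fphi[OF R0] phi0 K0 by simp
    moreover have "\<And>x y. x \<in> carrier A \<Longrightarrow> y \<in> carrier A \<Longrightarrow> ?f (x \<otimes>\<^bsub>A\<^esub> y) = ?f x \<otimes>\<^bsub>frac_field R\<^esub> ?f y"
      "\<And>x y. x \<in> carrier A \<Longrightarrow> y \<in> carrier A \<Longrightarrow> ?f (x \<oplus>\<^bsub>A\<^esub> y) = ?f x \<oplus>\<^bsub>frac_field R\<^esub> ?f y"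
      "?f \<one>\<^bsub>A\<^esub> = \<one>\<^bsub>frac_field R\<^esub>"
      using hm unfolding ring_hom_def by auto
    ultimately have "strongly_simple R (frac_field R) (frac_embed R)"
      using transfer_ss[OF ss bij one_closed zero_closed m_closed add.m_closed] phic fphi
      by blast
    then show "domain R \<and> algebra_iso R A phi (frac_field R) (frac_embed R) \<and> strongly_simple R (frac_field R) (frac_embed R)"
      using dom iso fphi unfolding algebra_iso_def by blast
  next
    assume rhs: "domain R \<and> algebra_iso R A phi (frac_field R) (frac_embed R) \<and> strongly_simple R (frac_field R) (frac_embed R)"
    then obtain f where iso: "f \<in> ring_iso A (frac_field R)" and fphi: "\<And>r. r \<in> carrier R \<Longrightarrow> f (phi r) = frac_embed R r"
      unfolding algebra_iso_def by blast
    have ssK: "strongly_simple R (frac_field R) (frac_embed R)" using rhs by blast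
    have hm: "f \<in> ring_hom A (frac_field R)" and bij: "bij_betw f (carrier A) (carrier (frac_field R))"
      using iso unfolding ring_iso_def by auto
    have fc: "\<And>x. x \<in> carrier A \<Longrightarrow> f x \<in> carrier (frac_field R)" using hm unfolding ring_hom_def by auto
    have fm: "\<And>x y. x \<in> carrier A \<Longrightarrow> y \<in> carrier A \<Longrightarrow> f (x \<otimes>\<^bsub>A\<^esub> y) = f x \<otimes>\<^bsub>frac_field R\<^esub> f y"
      and fa: "\<And>x y. x \<in> carrier A \<Longrightarrow> y \<in> carrier A \<Longrightarrow> f (x \<oplus>\<^bsub>A\<^esub> y) = f x \<oplus>\<^bsub>frac_field R\<^esub> f y"
      and f1: "f \<one>\<^bsub>A\<^esub> = \<one>\<^bsub>frac_field R\<^esub>"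
      using hm unfolding ring_hom_def by auto
    have injf: "inj_on f (carrier A)" and imf: "f ` carrier A = carrier (frac_field R)"
      using bij unfolding bij_betw_def by auto
    define g where "g = inv_into (carrier A) f"
    have gbij: "bij_betw g (carrier (frac_field R)) (carrier A)"
      unfolding g_def by (rule bij_betw_inv_into[OF bij])
    have gf: "\<And>x. x \<in> carrier A \<Longrightarrow> g (f x) = x" unfolding g_def using injf by (simp add: inv_into_f_f)
    have rep: "\<And>u. u \<in> carrier (frac_field R) \<Longrightarrow> \<exists>x\<in>carrier A. u = f x" using imf by auto
    show "strongly_simple R A phi"
    proof (rule transfer_ss[OF ssK gbij])
      show "\<one>\<^bsub>frac_field R\<^esub> \<in> carrier (frac_field R)" using f1 fc[OF one_closed] by simp
      show "\<zero>\<^bsub>frac_field R\<^esub> \<in> carrier (frac_field R)" using fc[OF phic[OF R0]] fphi[OF R0] K0 by simp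
      show "frac_embed R r \<in> carrier (frac_field R)" if r: "r \<in> carrier R" for r
        using fc[OF phic[OF r]] fphi[OF r] by simp
      show "g (frac_embed R r) = phi r" if r: "r \<in> carrier R" for r
        using gf[OF phic[OF r]] fphi[OF r] by simp
      show "g \<one>\<^bsub>frac_field R\<^esub> = \<one>\<^bsub>A\<^esub>" using gf[OF one_closed] f1 by simp
      show "g \<zero>\<^bsub>frac_field R\<^esub> = \<zero>\<^bsub>A\<^esub>" using gf[OF phic[OF R0]] fphi[OF R0] K0 phi0 by simp
    next
      fix u v assume u: "u \<in> carrier (frac_field R)" and v: "v \<in> carrier (frac_field R)"
      obtain x where x: "x \<in> carrier A" "u = f x" using rep[OF u] by blast
      obtain y where y: "y \<in> carrier A" "v = f y" using rep[OF v] by blast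
      show "u \<otimes>\<^bsub>frac_field R\<^esub> v \<in> carrier (frac_field R)" using fm[OF x(1) y(1)] fc[of "x \<otimes>\<^bsub>A\<^esub> y"] x y by simp
      show "u \<oplus>\<^bsub>frac_field R\<^esub> v \<in> carrier (frac_field R)" using fa[OF x(1) y(1)] fc[of "x \<oplus>\<^bsub>A\<^esub> y"] x y by simp
      show "g (u \<otimes>\<^bsub>frac_field R\<^esub> v) = g u \<otimes>\<^bsub>A\<^esub> g v" using fm[OF x(1) y(1), symmetric] gf[OF m_closed[OF x(1) y(1)]] gf[OF x(1)] gf[OF y(1)] x(2) y(2) by simp
      show "g (u \<oplus>\<^bsub>frac_field R\<^esub> v) = g u \<oplus>\<^bsub>A\<^esub> g v" using fa[OF x(1) y(1), symmetric] gf[OF add.m_closed[OF x(1) y(1)]] gf[OF x(1)] gf[OF y(1)] x(2) y(2) by simp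
    qed
  qed
qed

end
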